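(* Let $S=(n,\phi,F)$ be a semicoherent system whose component lifetimes $X_1,\ldots,X_n$ are exchangeable and have no ties. Then for every $j\in[n]$, $$I_{\mathrm{BP}}^{(j)}=b_j:=\sum_{A\subseteq[n]\setminus\{j\}}\frac{1}{n\binom{n-1}{|A|}}\big(\phi(A\cup\{j\})-\phi(A)\big).$$
   Context: Semicoherent system: $\phi:2^{[n]}\to\{0,1\}$ nondecreasing (subsets identified with Boolean vectors), $\phi(\varnothing)=0$, $\phi([n])=1$; $F$ is the joint c.d.f. of nonnegative lifetimes; no ties means $\Pr(X_i=X_k)=0$ for $i\neq k$. System lifetime $T=\inf\{t\geq0:\phi(\{i:X_i>t\})=0\}$; $I_{\mathrm{BP}}^{(j)}=\Pr(T=X_j)$. *)

theory Defs
  imports "HOL-Probability.Probability"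
begin

text \<open>Semicoherent structure function on components {1..n}: subsets are
  identified with Boolean vectors; phi is nondecreasing, phi {} = 0, phi [n] = 1.\<close>
definition semicoherent :: "nat \<Rightarrow> (nat set \<Rightarrow> bool) \<Rightarrow> bool" where
  "semicoherent n \<phi> \<longleftrightarrow>
     (\<forall>A B. A \<subseteq> B \<longrightarrow> B \<subseteq> {1..n} \<longrightarrow> \<phi> A \<longrightarrow> \<phi> B) \<and>
     \<not> \<phi> {} \<and> \<phi> {1..n}"

definition sys_lifetime ::
    "nat \<Rightarrow> (nat set \<Rightarrow> bool) \<Rightarrow> (nat \<Rightarrow> 'a \<Rightarrow> real) \<Rightarrow> 'a \<Rightarrow> real" where
  "sys_lifetime n \<phi> X \<omega> = Inf {t. 0 \<le> t \<and> \<not> \<phi> {i \<in> {1..n}. X i \<omega> > t}}"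

definition exchangeable :: "'a measure \<Rightarrow> nat \<Rightarrow> (nat \<Rightarrow> 'a \<Rightarrow> real) \<Rightarrow> bool" where
  "exchangeable M n X \<longleftrightarrow>
     (\<forall>\<sigma>. \<sigma> permutes {1..n} \<longrightarrow>
        distr M (PiM {1..n} (\<lambda>_. borel)) (\<lambda>\<omega>. \<lambda>i\<in>{1..n}. X (\<sigma> i) \<omega>) =
        distr M (PiM {1..n} (\<lambda>_. borel)) (\<lambda>\<omega>. \<lambda>i\<in>{1..n}. X i \<omega>))"

definition no_ties :: "'a measure \<Rightarrow> nat \<Rightarrow> (nat \<Rightarrow> 'a \<Rightarrow> real) \<Rightarrow> bool" where
  "no_ties M n X \<longleftrightarrow>
     (\<forall>i\<in>{1..n}. \<forall>k\<in>{1..n}. i \<noteq> k \<longrightarrow>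
        measure M {\<omega> \<in> space M. X i \<omega> = X k \<omega>} = 0)"

definition I_BP :: "'a measure \<Rightarrow> nat \<Rightarrow> (nat set \<Rightarrow> bool) \<Rightarrow> (nat \<Rightarrow> 'a \<Rightarrow> real) \<Rightarrow> nat \<Rightarrow> real" where
  "I_BP M n \<phi> X j = measure M {\<omega> \<in> space M. sys_lifetime n \<phi> X \<omega> = X j \<omega>}"

end

theory Submission
  imports Defs
begin


lemma det_char:
  fixes x :: "nat \<Rightarrow> real"
  assumes sc: "semicoherent n \<phi>"
  shows "Inf {t. 0 \<le> t \<and> \<not> \<phi> {i\<in>{1..n}. x i > t}} = y \<longleftrightarrow>
    (0 \<le> y \<and> \<not> \<phi> {i\<in>{1..n}. x i > y} \<and>
     (\<forall>c\<in>insert 0 (x ` {1..n}). 0 \<le> c \<and> c < y \<longrightarrow> \<phi> {i\<in>{1..n}. x i > c}))"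
    (is "Inf ?S = y \<longleftrightarrow> ?R y")
proof -
  let ?C = "insert 0 (x ` {1..n})"
  have finC: "finite ?C" by simp
  have D1: "Inf ?S = z" if R: "?R z" for z
  proof (rule cInf_eq_minimum)
    show "z \<in> ?S" using R by simp
    fix t assume t: "t \<in> ?S"
    show "z \<le> t"
    proof (rule ccontr)
      assume "\<not> z \<le> t" hence tz: "t < z" by simp
      let ?D = "{c\<in>?C. c \<le> t}"
      have finD: "finite ?D" using finC by simp
      have D0: "0 \<in> ?D" using t by simp
      define c where "c = Max ?D"
      have cD: "c \<in> ?D" unfolding c_def using finD D0 by (intro Max_in) auto
      have c0: "0 \<le> c" unfolding c_def using finD D0 Max_ge by blast
      have al: "{i\<in>{1..n}. x i > c} = {i\<in>{1..n}. x i > t}"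
      proof safe
        fix i assume i: "i \<in> {1..n}" "c < x i"
        show "t < x i"
        proof (rule ccontr)
          assume "\<not> t < x i"
          hence "x i \<in> ?D" using i by auto
          hence "x i \<le> c" unfolding c_def using finD Max_ge by blast
          thus False using i by simp
        qed
      next
        fix i assume "i \<in> {1..n}" "t < x i" thus "c < x i" using cD by auto
      qed
      have "\<phi> {i\<in>{1..n}. x i > c}" using R cD c0 tz by auto
      thus False using t al by simp
    qed
  qed
  define m where "m = Max ?C"
  have MC: "m \<in> ?C" unfolding m_def using finC by (intro Max_in) auto
  have Mge: "\<And>c. c \<in> ?C \<Longrightarrow> c \<le> m" unfolding m_def using finC by (intro Max_ge) auto
  define cs where "cs = Min {c\<in>?C. c \<in> ?S}"
  have mS: "m \<in> ?S"
  proof -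
    have xle: "x i \<le> m" if "i \<in> {1..n}" for i
    proof -
      have "x i \<in> ?C" using that by blast
      thus ?thesis by (rule Mge)
    qed
    have e: "{i\<in>{1..n}. x i > m} = {}" using xle by (auto simp: not_less)
    have "0 \<le> m" by (rule Mge) simp
    moreover have "\<not> \<phi> {}" using sc unfolding semicoherent_def by simp
    ultimately show ?thesis unfolding mem_Collect_eq e by blast
  qed
  have ne: "m \<in> {c\<in>?C. c \<in> ?S}" using mS MC by (simp only: mem_Collect_eq) simp
  have finCS: "finite {c\<in>?C. c \<in> ?S}" by (rule finite_subset[OF _ finC]) (rule Collect_subset)
  have neCS: "{c\<in>?C. c \<in> ?S} \<noteq> {}" using ne by (rule ex_in_conv[THEN iffD1, OF exI])
  have csin: "cs \<in> {c\<in>?C. c \<in> ?S}" unfolding cs_def using finCS neCS by (rule Min_in)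
  have Rcs: "?R cs"
  proof -
    have "\<phi> {i\<in>{1..n}. x i > c}" if "c \<in> ?C" "0 \<le> c" "c < cs" for c
    proof (rule ccontr)
      assume "\<not> ?thesis"
      hence "c \<in> {c\<in>?C. c \<in> ?S}" using that by (simp only: mem_Collect_eq) simp
      hence "cs \<le> c" unfolding cs_def using finCS by (intro Min_le)
      thus False using that by simp
    qed
    moreover have "0 \<le> cs" "\<not> \<phi> {i\<in>{1..n}. x i > cs}" using csin by (simp_all only: mem_Collect_eq) simp_all
    ultimately show ?thesis by blast
  qed
  have ic: "Inf ?S = cs" using D1[OF Rcs] .
  show ?thesis
  proof
    assume "Inf ?S = y" thus "?R y" using ic Rcs by simp
  next
    assume "?R y" thus "Inf ?S = y" by (rule D1)
  qed
qed



lemma good_char: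
  fixes x :: "nat \<Rightarrow> real"
  assumes sc: "semicoherent n \<phi>" and j: "j \<in> {1..n}"
    and nn: "\<And>i. i \<in> {1..n} \<Longrightarrow> 0 \<le> x i"
    and dist: "\<And>i k. i \<in> {1..n} \<Longrightarrow> k \<in> {1..n} \<Longrightarrow> i \<noteq> k \<Longrightarrow> x i \<noteq> x k"
  shows "(0 \<le> x j \<and> \<not> \<phi> {i\<in>{1..n}. x i > x j} \<and>
     (\<forall>c\<in>insert 0 (x ` {1..n}). 0 \<le> c \<and> c < x j \<longrightarrow> \<phi> {i\<in>{1..n}. x i > c}))
    \<longleftrightarrow> \<phi> ({i\<in>{1..n}. x i > x j} \<union> {j}) \<and> \<not> \<phi> {i\<in>{1..n}. x i > x j}"
proof -
  let ?A = "{i\<in>{1..n}. x i > x j}"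
  let ?C = "insert 0 (x ` {1..n})"
  have mono: "\<And>A B. A \<subseteq> B \<Longrightarrow> B \<subseteq> {1..n} \<Longrightarrow> \<phi> A \<Longrightarrow> \<phi> B"
    using sc unfolding semicoherent_def by blast
  have full: "\<phi> {1..n}" using sc unfolding semicoherent_def by blast
  have Aj: "?A \<union> {j} \<subseteq> {1..n}" using j by blast
  show ?thesis
  proof
    assume R: "0 \<le> x j \<and> \<not> \<phi> ?A \<and>
     (\<forall>c\<in>?C. 0 \<le> c \<and> c < x j \<longrightarrow> \<phi> {i\<in>{1..n}. x i > c})"
    have "\<phi> (?A \<union> {j})"
    proof (cases "x j = 0")
      case True
      have "?A \<union> {j} = {1..n}"
      proof (rule equalityI[OF Aj], rule subsetI)
        fix i assume i: "i \<in> {1..n}"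
        show "i \<in> ?A \<union> {j}"
        proof (cases "i = j")
          case False
          hence "x i \<noteq> x j" using dist i j by blast
          moreover have "0 \<le> x i" using nn i .
          ultimately show ?thesis using True i by auto
        qed simp
      qed
      thus ?thesis using full by simp
    next
      case False
      hence xj: "0 < x j" using R by simp
      let ?D = "{c\<in>?C. c < x j}"
      have finD: "finite ?D" by simp
      have D0: "0 \<in> ?D" using xj by simp
      define c where "c = Max ?D"
      have cD: "c \<in> ?D" unfolding c_def using finD D0 by (intro Max_in) auto
      have c0: "0 \<le> c" unfolding c_def using finD D0 Max_ge by blast
      have al: "{i\<in>{1..n}. x i > c} = ?A \<union> {j}"
      proof (rule set_eqI)
        fix i
        have "i \<in> {1..n} \<and> c < x i \<longleftrightarrow> i \<in> {1..n} \<and> (x j < x i \<or> i = j)"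
        proof (cases "i \<in> {1..n}")
          case i: True
          show ?thesis
          proof (cases "i = j")
            case True thus ?thesis using cD by auto
          next
            case False
            hence ne: "x i \<noteq> x j" using i dist j by blast
            show ?thesis
            proof (cases "x i < x j")
              case True
              hence "x i \<in> ?D" using i by auto
              hence "x i \<le> c" unfolding c_def using finD Max_ge by blast
              thus ?thesis using True False by auto
            next
              case False
              hence "x j < x i" using ne by simp
              thus ?thesis using cD i by auto
            qed
          qed
        qed auto
        thus "i \<in> {i\<in>{1..n}. x i > c} \<longleftrightarrow> i \<in> ?A \<union> {j}" using j by auto
      qed
      have "\<phi> {i\<in>{1..n}. x i > c}" using R cD c0 by auto
      thus ?thesis using al by simp
    qed
    thus "\<phi> (?A \<union> {j}) \<and> \<not> \<phi> ?A" using R by simp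
  next
    assume cr: "\<phi> (?A \<union> {j}) \<and> \<not> \<phi> ?A"
    have "\<phi> {i\<in>{1..n}. x i > c}" if "c \<in> ?C" "0 \<le> c" "c < x j" for c
    proof (rule mono[of "?A \<union> {j}"])
      show "?A \<union> {j} \<subseteq> {i\<in>{1..n}. x i > c}" using that j by auto
    qed (use cr in auto)
    moreover have "0 \<le> x j" using nn j .
    ultimately show "0 \<le> x j \<and> \<not> \<phi> ?A \<and>
     (\<forall>c\<in>?C. 0 \<le> c \<and> c < x j \<longrightarrow> \<phi> {i\<in>{1..n}. x i > c})" using cr by blast
  qed
qed



lemma rank_lt:
  fixes x :: "nat \<Rightarrow> real"
  assumes "j \<in> I" "j' \<in> I" "x j < x j'" "finite I"
  shows "card {i\<in>I. x j' < x i} < card {i\<in>I. x j < x i}"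
proof (rule psubset_card_mono)
  show "finite {i\<in>I. x j < x i}" using assms by simp
  show "{i\<in>I. x j' < x i} \<subset> {i\<in>I. x j < x i}"
  proof
    show "{i\<in>I. x j' < x i} \<subseteq> {i\<in>I. x j < x i}" using assms by auto
    show "{i\<in>I. x j' < x i} \<noteq> {i\<in>I. x j < x i}"
    proof
      assume e: "{i\<in>I. x j' < x i} = {i\<in>I. x j < x i}"
      have "j' \<in> {i\<in>I. x j < x i}" using assms by simp
      hence "j' \<in> {i\<in>I. x j' < x i}" unfolding e .
      thus False by simp
    qed
  qed
qed

lemma rank_inj:
  fixes x :: "nat \<Rightarrow> real"
  assumes fin: "finite I" and dist: "\<And>i k. i \<in> I \<Longrightarrow> k \<in> I \<Longrightarrow> i \<noteq> k \<Longrightarrow> x i \<noteq> x k"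
  shows "inj_on (\<lambda>j. card {i\<in>I. x j < x i}) I"
proof (rule inj_onI)
  fix j j' assume j: "j \<in> I" "j' \<in> I" and eq: "card {i\<in>I. x j < x i} = card {i\<in>I. x j' < x i}"
  show "j = j'"
  proof (rule ccontr)
    assume "j \<noteq> j'"
    hence "x j < x j' \<or> x j' < x j" using dist j by (meson linorder_neqE_linordered_idom)
    thus False using rank_lt[of j I j' x] rank_lt[of j' I j x] j fin eq by auto
  qed
qed

lemma rank_surj:
  fixes x :: "nat \<Rightarrow> real"
  assumes dist: "\<And>i k. i \<in> {1..n} \<Longrightarrow> k \<in> {1..n} \<Longrightarrow> i \<noteq> k \<Longrightarrow> x i \<noteq> x k"
    and k: "k < n"
  shows "\<exists>j\<in>{1..n}. card {i\<in>{1..n}. x j < x i} = k"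
proof -
  let ?r = "\<lambda>j. card {i\<in>{1..n}. x j < x i}"
  have inj: "inj_on ?r {1..n}" by (rule rank_inj) (use dist in auto)
  have sub: "?r ` {1..n} \<subseteq> {..<n}"
  proof
    fix y assume "y \<in> ?r ` {1..n}"
    then obtain j where j: "j \<in> {1..n}" "y = ?r j" by blast
    have "{i\<in>{1..n}. x j < x i} \<subseteq> {1..n} - {j}" by auto
    hence "?r j \<le> card ({1..n} - {j})" by (intro card_mono) auto
    also have "\<dots> = n - 1" using j by simp
    finally show "y \<in> {..<n}" using j by auto
  qed
  have "card (?r ` {1..n}) = card {..<n}" using card_image[OF inj] by simp
  hence eq: "?r ` {1..n} = {..<n}" using sub by (intro card_subset_eq) simp_all
  have "k \<in> ?r ` {1..n}" unfolding eq using k by simp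
  then obtain j where "j \<in> {1..n}" "k = ?r j" by (rule imageE)
  thus ?thesis by metis
qed

lemma perm_exists:
  fixes n :: nat
  assumes j: "j \<in> {1..n}" "j' \<in> {1..n}"
    and A: "A \<subseteq> {1..n} - {j}" "A' \<subseteq> {1..n} - {j'}" and c: "card A = card A'"
  shows "\<exists>\<sigma>. \<sigma> permutes {1..n} \<and> \<sigma> j = j' \<and> \<sigma> ` A = A'"
proof -
  let ?I = "{1..n::nat}"
  define C where "C = ?I - {j} - A"
  define C' where "C' = ?I - {j'} - A'"
  have finA: "finite A" "finite A'" using A(1) A(2) by (meson finite_Diff finite_atLeastAtMost finite_subset)+
  obtain f where f: "bij_betw f A A'" using finite_same_card_bij[OF finA c] by blast
  have "card C = card (?I - {j}) - card A" unfolding C_def using A finA by (subst card_Diff_subset) auto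
  moreover have "card C' = card (?I - {j'}) - card A'" unfolding C'_def using A finA by (subst card_Diff_subset) auto
  ultimately have cC: "card C = card C'" using j c by simp
  obtain g where g: "bij_betw g C C'" using finite_same_card_bij[OF _ _ cC] unfolding C_def C'_def by auto
  define \<sigma> where "\<sigma> x = (if x = j then j' else if x \<in> A then f x else if x \<in> C then g x else x)" for x
  have fA: "x \<in> A \<Longrightarrow> f x \<in> A'" for x using f by (auto simp: bij_betw_def)
  have gC: "x \<in> C \<Longrightarrow> g x \<in> C'" for x using g by (auto simp: bij_betw_def)
  have fi: "inj_on f A" using f by (auto simp: bij_betw_def)
  have gi: "inj_on g C" using g by (auto simp: bij_betw_def)
  have jA: "j \<notin> A" "j' \<notin> A'" using A by auto
  have jC: "j \<notin> C" "j' \<notin> C'" unfolding C_def C'_def by auto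
  have AC: "A \<inter> C = {}" "A' \<inter> C' = {}" unfolding C_def C'_def by auto
  have IU: "?I = insert j (A \<union> C)" unfolding C_def using j A by auto
  have IU': "?I = insert j' (A' \<union> C')" unfolding C'_def using j A by auto
  have s1: "\<sigma> j = j'" unfolding \<sigma>_def by simp
  have s2: "z \<in> A \<Longrightarrow> \<sigma> z = f z" for z using jA unfolding \<sigma>_def by auto
  have s3: "z \<in> C \<Longrightarrow> \<sigma> z = g z" for z using jC AC unfolding \<sigma>_def by auto
  have d1: "z \<in> A \<Longrightarrow> f z \<noteq> j'" for z by (metis fA jA(2))
  have d2: "z \<in> C \<Longrightarrow> g z \<noteq> j'" for z by (metis gC jC(2))
  have d3: "z \<in> A \<Longrightarrow> w \<in> C \<Longrightarrow> f z \<noteq> g w" for z w by (metis fA gC AC(2) disjoint_iff)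
  have x3: "x = j \<or> x \<in> A \<or> x \<in> C" if "x \<in> ?I" for x using that[unfolded IU] by simp
  have img: "\<sigma> ` ?I \<subseteq> ?I"
  proof
    fix y assume "y \<in> \<sigma> ` ?I"
    then obtain x where x: "x \<in> ?I" "y = \<sigma> x" by blast
    show "y \<in> ?I"
    proof -
      have "x = j \<or> x \<in> A \<or> x \<in> C" by (rule x3[OF x(1)])
      moreover have "j' \<in> ?I" using j by simp
      moreover have "f x \<in> ?I" if "x \<in> A" unfolding IU' using fA[OF that] by simp
      moreover have "g x \<in> ?I" if "x \<in> C" unfolding IU' using gC[OF that] by simp
      ultimately show ?thesis using x(2) s1 s2 s3 by metis
    qed
  qed
  have inj: "inj_on \<sigma> ?I"
  proof (rule inj_onI)
    fix x y assume x: "x \<in> ?I" and y: "y \<in> ?I" and e: "\<sigma> x = \<sigma> y"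
    have xx: "x = j \<or> x \<in> A \<or> x \<in> C" by (rule x3[OF x])
    have yy: "y = j \<or> y \<in> A \<or> y \<in> C" by (rule x3[OF y])
    show "x = y"
      using xx
    proof (elim disjE)
      assume xj: "x = j"
      show ?thesis using yy
      proof (elim disjE)
        assume "y \<in> A" thus ?thesis using e xj s1 s2 d1 by metis
      next
        assume "y \<in> C" thus ?thesis using e xj s1 s3 d2 by metis
      qed (use xj in simp)
    next
      assume xa: "x \<in> A"
      show ?thesis using yy
      proof (elim disjE)
        assume "y = j" thus ?thesis using e xa s1 s2 d1 by metis
      next
        assume ya: "y \<in> A"
        have "f x = f y" using e xa ya s2 by metis
        thus ?thesis using fi xa ya by (meson inj_onD)
      next
        assume "y \<in> C" thus ?thesis using e xa s2 s3 d3 by metis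
      qed
    next
      assume xc: "x \<in> C"
      show ?thesis using yy
      proof (elim disjE)
        assume "y = j" thus ?thesis using e xc s1 s3 d2 by metis
      next
        assume "y \<in> A" thus ?thesis using e xc s2 s3 d3 by metis
      next
        assume yc: "y \<in> C"
        have "g x = g y" using e xc yc s3 by metis
        thus ?thesis using gi xc yc by (meson inj_onD)
      qed
    qed
  qed
  have bij: "bij_betw \<sigma> ?I ?I" using endo_inj_surj[OF _ img inj] inj by (auto simp: bij_betw_def)
  have out: "\<sigma> x = x" if "x \<notin> ?I" for x
  proof -
    have "x \<noteq> j" "x \<notin> A" "x \<notin> C" using that unfolding IU by simp_all
    thus ?thesis unfolding \<sigma>_def by simp
  qed
  have perm: "\<sigma> permutes ?I" by (rule bij_imp_permutes[OF bij out])
  have "\<sigma> ` A = f ` A" using s2 by (rule image_cong[OF refl])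
  also have "\<dots> = A'" using f by (simp add: bij_betw_def)
  finally show ?thesis using perm s1 by blast
qed



lemma pred_setfun:
  assumes "finite I" "\<And>i. i \<in> I \<Longrightarrow> Measurable.pred M (P i)"
  shows "Measurable.pred M (\<lambda>\<omega>. Q {i\<in>I. P i \<omega>})"
proof -
  have eq: "(\<lambda>\<omega>. Q {i\<in>I. P i \<omega>}) = (\<lambda>\<omega>. \<exists>B\<in>{B. B \<subseteq> I \<and> Q B}. \<forall>i\<in>I. P i \<omega> = (i \<in> B))"
  proof (rule ext)
    fix \<omega>
    show "Q {i\<in>I. P i \<omega>} = (\<exists>B\<in>{B. B \<subseteq> I \<and> Q B}. \<forall>i\<in>I. P i \<omega> = (i \<in> B))"
    proof
      assume "Q {i\<in>I. P i \<omega>}" thus "\<exists>B\<in>{B. B \<subseteq> I \<and> Q B}. \<forall>i\<in>I. P i \<omega> = (i \<in> B)"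
        by (intro bexI[of _ "{i\<in>I. P i \<omega>}"]) auto
    next
      assume "\<exists>B\<in>{B. B \<subseteq> I \<and> Q B}. \<forall>i\<in>I. P i \<omega> = (i \<in> B)"
      then obtain B where B: "B \<subseteq> I" "Q B" "\<forall>i\<in>I. P i \<omega> = (i \<in> B)" by blast
      have "{i\<in>I. P i \<omega>} = B" using B by auto
      thus "Q {i\<in>I. P i \<omega>}" using B by simp
    qed
  qed
  have fin: "finite {B. B \<subseteq> I \<and> Q B}" using assms(1) by simp
  show ?thesis unfolding eq
    by (intro pred_intros_finite fin assms(1) pred_intros_logic assms(2)) simp_all
qed

lemma sys_char:
  assumes "semicoherent n \<phi>"
  shows "sys_lifetime n \<phi> X \<omega> = y \<longleftrightarrow>
    (0 \<le> y \<and> \<not> \<phi> {i\<in>{1..n}. X i \<omega> > y} \<and>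
     (0 < y \<longrightarrow> \<phi> {i\<in>{1..n}. X i \<omega> > 0}) \<and>
     (\<forall>k\<in>{1..n}. 0 \<le> X k \<omega> \<and> X k \<omega> < y \<longrightarrow> \<phi> {i\<in>{1..n}. X i \<omega> > X k \<omega>}))"
  unfolding sys_lifetime_def using det_char[OF assms, of "\<lambda>i. X i \<omega>" y] by simp



lemma exch_ev:
  fixes X :: "nat \<Rightarrow> 'a \<Rightarrow> real"
  assumes Xm: "\<And>i. i \<in> {1..n} \<Longrightarrow> X i \<in> borel_measurable M"
    and ex: "exchangeable M n X" and sg: "\<sigma> permutes {1..n}" and j: "j \<in> {1..n}"
  shows "measure M {\<omega>\<in>space M. {i\<in>{1..n}. X (\<sigma> j) \<omega> < X i \<omega>} = \<sigma> ` A}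
       = measure M {\<omega>\<in>space M. {i\<in>{1..n}. X j \<omega> < X i \<omega>} = A}"
proof -
  let ?I = "{1..n::nat}"
  let ?PM = "PiM ?I (\<lambda>_. borel) :: (nat \<Rightarrow> real) measure"
  define B where "B = {x\<in>space ?PM. {i\<in>?I. x j < x i} = A}"
  have "Measurable.pred ?PM (\<lambda>x. {i\<in>?I. x j < x i} = A)"
  proof (rule pred_setfun[where Q="\<lambda>S. S = A"])
    fix i assume i: "i \<in> ?I"
    show "Measurable.pred ?PM (\<lambda>x. x j < x i)"
      by (rule borel_measurable_pred_less; rule measurable_component_singleton) (use i j in simp_all)
  qed simp
  hence Bs: "B \<in> sets ?PM" unfolding B_def pred_def .
  have si: "\<And>i. i \<in> ?I \<Longrightarrow> \<sigma> i \<in> ?I" using permutes_in_image[OF sg] by simp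
  have Vm: "(\<lambda>\<omega>. \<lambda>i\<in>?I. X i \<omega>) \<in> measurable M ?PM"
    by (rule measurable_restrict) (rule Xm)
  have Vsm: "(\<lambda>\<omega>. \<lambda>i\<in>?I. X (\<sigma> i) \<omega>) \<in> measurable M ?PM"
    by (rule measurable_restrict) (rule Xm[OF si])
  have e1: "(\<lambda>\<omega>. \<lambda>i\<in>?I. X i \<omega>) -` B \<inter> space M = {\<omega>\<in>space M. {i\<in>?I. X j \<omega> < X i \<omega>} = A}"
  proof -
    have "(\<lambda>\<omega>. \<lambda>i\<in>?I. X i \<omega>) \<omega> \<in> space ?PM" if "\<omega> \<in> space M" for \<omega>
      using measurable_space[OF Vm that] .
    moreover have "{i\<in>?I. (\<lambda>i\<in>?I. X i \<omega>) j < (\<lambda>i\<in>?I. X i \<omega>) i} = {i\<in>?I. X j \<omega> < X i \<omega>}" for \<omega>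
      using j by auto
    ultimately show ?thesis unfolding B_def by auto
  qed
  have e2: "(\<lambda>\<omega>. \<lambda>i\<in>?I. X (\<sigma> i) \<omega>) -` B \<inter> space M = {\<omega>\<in>space M. {i\<in>?I. X (\<sigma> j) \<omega> < X i \<omega>} = \<sigma> ` A}"
  proof -
    have "(\<lambda>\<omega>. \<lambda>i\<in>?I. X (\<sigma> i) \<omega>) \<omega> \<in> space ?PM" if "\<omega> \<in> space M" for \<omega>
      using measurable_space[OF Vsm that] .
    moreover have "{i\<in>?I. (\<lambda>i\<in>?I. X (\<sigma> i) \<omega>) j < (\<lambda>i\<in>?I. X (\<sigma> i) \<omega>) i} = A
         \<longleftrightarrow> {i\<in>?I. X (\<sigma> j) \<omega> < X i \<omega>} = \<sigma> ` A" for \<omega>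
    proof -
      have a: "{i\<in>?I. (\<lambda>i\<in>?I. X (\<sigma> i) \<omega>) j < (\<lambda>i\<in>?I. X (\<sigma> i) \<omega>) i} = {i\<in>?I. X (\<sigma> j) \<omega> < X (\<sigma> i) \<omega>}"
        using j by auto
      have b: "{i\<in>?I. X (\<sigma> j) \<omega> < X i \<omega>} = \<sigma> ` {i\<in>?I. X (\<sigma> j) \<omega> < X (\<sigma> i) \<omega>}"
      proof (rule set_eqI)
        fix k
        show "k \<in> {i\<in>?I. X (\<sigma> j) \<omega> < X i \<omega>} \<longleftrightarrow> k \<in> \<sigma> ` {i\<in>?I. X (\<sigma> j) \<omega> < X (\<sigma> i) \<omega>}"
        proof
          assume k: "k \<in> {i\<in>?I. X (\<sigma> j) \<omega> < X i \<omega>}"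
          have "k \<in> \<sigma> ` ?I" using k permutes_image[OF sg] by simp
          then obtain i where "i \<in> ?I" "k = \<sigma> i" by blast
          thus "k \<in> \<sigma> ` {i\<in>?I. X (\<sigma> j) \<omega> < X (\<sigma> i) \<omega>}" using k by auto
        next
          assume "k \<in> \<sigma> ` {i\<in>?I. X (\<sigma> j) \<omega> < X (\<sigma> i) \<omega>}"
          thus "k \<in> {i\<in>?I. X (\<sigma> j) \<omega> < X i \<omega>}" using si by auto
        qed
      qed
      have inj: "inj \<sigma>" using permutes_inj[OF sg] .
      show ?thesis unfolding a b using inj_image_eq_iff[OF inj] by metis
    qed
    ultimately show ?thesis unfolding B_def by auto
  qed
  have "measure M {\<omega>\<in>space M. {i\<in>?I. X (\<sigma> j) \<omega> < X i \<omega>} = \<sigma> ` A}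
      = measure (distr M ?PM (\<lambda>\<omega>. \<lambda>i\<in>?I. X (\<sigma> i) \<omega>)) B"
    unfolding e2[symmetric] by (rule measure_distr[OF Vsm Bs, symmetric])
  also have "\<dots> = measure (distr M ?PM (\<lambda>\<omega>. \<lambda>i\<in>?I. X i \<omega>)) B"
    using ex sg unfolding exchangeable_def by simp
  also have "\<dots> = measure M {\<omega>\<in>space M. {i\<in>?I. X j \<omega> < X i \<omega>} = A}"
    unfolding e1[symmetric] by (rule measure_distr[OF Vm Bs])
  finally show ?thesis .
qed



theorem corollary8:
  fixes M :: "'a measure" and n :: nat and \<phi> :: "nat set \<Rightarrow> bool"
    and X :: "nat \<Rightarrow> 'a \<Rightarrow> real" and j :: nat
  assumes "prob_space M"
    and "semicoherent n \<phi>"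
    and "\<And>i. i \<in> {1..n} \<Longrightarrow> X i \<in> borel_measurable M"
    and "\<And>i. i \<in> {1..n} \<Longrightarrow> (AE \<omega> in M. 0 \<le> X i \<omega>)"
    and "exchangeable M n X"
    and "no_ties M n X"
    and "j \<in> {1..n}"
  shows "I_BP M n \<phi> X j =
    (\<Sum>A\<in>Pow ({1..n} - {j}).
       (1 / (real n * real (n - 1 choose card A))) *
       (of_bool (\<phi> (A \<union> {j})) - of_bool (\<phi> A)))"
proof -
  interpret prob_space M by fact
  note sc = assms(2) and Xm = assms(3) and ex = assms(5) and jI = assms(7)
  let ?I = "{1..n::nat}"
  define ev where "ev j A = {\<omega>\<in>space M. {i\<in>?I. X j \<omega> < X i \<omega>} = A}" for j A
  have ev_pred: "Measurable.pred M (\<lambda>\<omega>. {i\<in>?I. X j \<omega> < X i \<omega>} = A)" if "j \<in> ?I" for j A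
  proof (rule pred_setfun[where Q="\<lambda>S. S = A"])
    fix i assume i: "i \<in> ?I"
    show "Measurable.pred M (\<lambda>x. X j x < X i x)"
      by (rule borel_measurable_pred_less) (use i that Xm in simp_all)
  qed simp
  have ev_sets: "ev j A \<in> sets M" if "j \<in> ?I" for j A
    using ev_pred[OF that] unfolding ev_def pred_def .
  define G where "G = {\<omega>\<in>space M. (\<forall>i\<in>?I. 0 \<le> X i \<omega>) \<and> (\<forall>i\<in>?I. \<forall>k\<in>?I. i \<noteq> k \<longrightarrow> X i \<omega> \<noteq> X k \<omega>)}"
  have G_sets: "G \<in> sets M"
  proof -
    have "Measurable.pred M (\<lambda>\<omega>. (\<forall>i\<in>?I. 0 \<le> X i \<omega>) \<and> (\<forall>i\<in>?I. \<forall>k\<in>?I. i \<noteq> k \<longrightarrow> X i \<omega> \<noteq> X k \<omega>))"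
      using Xm by measurable
    thus ?thesis unfolding G_def pred_def .
  qed
  have AEG: "AE \<omega> in M. \<omega> \<in> G"
  proof -
    have a1: "AE \<omega> in M. \<forall>i\<in>?I. 0 \<le> X i \<omega>"
      by (rule eventually_ball_finite) (use assms(4) in auto)
    have a2: "AE \<omega> in M. X i \<omega> \<noteq> X k \<omega>" if "i \<in> ?I" "k \<in> ?I" "i \<noteq> k" for i k
    proof -
      have s: "{\<omega>\<in>space M. X i \<omega> = X k \<omega>} \<in> sets M" using Xm that by measurable
      have "measure M {\<omega>\<in>space M. X i \<omega> = X k \<omega>} = 0" using assms(6) that unfolding no_ties_def by blast
      hence "emeasure M {\<omega>\<in>space M. X i \<omega> = X k \<omega>} = 0" using s by (simp add: emeasure_eq_measure)
      thus ?thesis using AE_iff_measurable[OF s, of "\<lambda>\<omega>. X i \<omega> \<noteq> X k \<omega>"] by simp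
    qed
    have a3: "AE \<omega> in M. \<forall>i\<in>?I. \<forall>k\<in>?I. i \<noteq> k \<longrightarrow> X i \<omega> \<noteq> X k \<omega>"
      by (intro eventually_ball_finite ballI) (use a2 in auto)
    show ?thesis using a1 a3 AE_space unfolding G_def by eventually_elim auto
  qed
  have ev_G: "measure M (ev j A \<inter> G) = measure M (ev j A)" if "j \<in> ?I" for j A
    by (rule measure_eq_AE) (use AEG ev_sets[OF that] G_sets in auto)
  have exch: "measure M (ev (\<sigma> j) (\<sigma> ` A)) = measure M (ev j A)" if "\<sigma> permutes ?I" "j \<in> ?I" for \<sigma> j A
    unfolding ev_def by (rule exch_ev[OF Xm ex that])
  have sym: "measure M (ev j A) = measure M (ev j' A')"
    if h: "j \<in> ?I" "j' \<in> ?I" "A \<subseteq> ?I - {j}" "A' \<subseteq> ?I - {j'}" "card A = card A'" for j j' A A'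
  proof -
    obtain \<sigma> where s: "\<sigma> permutes ?I" "\<sigma> j = j'" "\<sigma> ` A = A'" using perm_exists[OF h] by blast
    show ?thesis using exch[OF s(1) h(1), of A] s by simp
  qed
  define P where "P k = Sigma ?I (\<lambda>j. {A. A \<subseteq> ?I - {j} \<and> card A = k})" for k
  have finP: "finite (P k)" for k unfolding P_def by (intro finite_SigmaI) auto
  have cardP: "card (P k) = n * (n - 1 choose k)" for k
  proof -
    have "card (P k) = (\<Sum>j\<in>?I. card {A. A \<subseteq> ?I - {j} \<and> card A = k})"
      unfolding P_def by (rule card_SigmaI) auto
    also have "\<dots> = (\<Sum>j\<in>?I. (n - 1 choose k))"
      by (rule sum.cong[OF refl]) (subst n_subsets, auto)
    finally show ?thesis by simp
  qed
  have tot: "(\<Sum>p\<in>P k. measure M (ev (fst p) (snd p))) = 1" if k: "k < n" for k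
  proof -
    let ?F = "\<lambda>p. ev (fst p) (snd p) \<inter> G"
    have PI: "fst p \<in> ?I" if "p \<in> P k" for p using that unfolding P_def by auto
    have "(\<Sum>p\<in>P k. measure M (ev (fst p) (snd p))) = (\<Sum>p\<in>P k. measure M (?F p))"
      by (rule sum.cong[OF refl]) (simp add: ev_G[OF PI])
    also have "\<dots> = measure M (\<Union>p\<in>P k. ?F p)"
    proof (rule finite_measure_finite_Union[symmetric])
      show "finite (P k)" by (rule finP)
      show "?F ` P k \<subseteq> sets M" using ev_sets PI G_sets by auto
      show "disjoint_family_on ?F (P k)"
      unfolding disjoint_family_on_def proof (intro ballI impI)
        fix p q assume p: "p \<in> P k" and q: "q \<in> P k" and pq: "p \<noteq> q"
        obtain j A where pj: "p = (j, A)" by (cases p)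
        obtain j' A' where qj: "q = (j', A')" by (cases q)
        have j: "j \<in> ?I" "card A = k" using p unfolding pj P_def by auto
        have j': "j' \<in> ?I" "card A' = k" using q unfolding qj P_def by auto
        show "?F p \<inter> ?F q = {}"
        proof (rule ccontr)
          assume "?F p \<inter> ?F q \<noteq> {}"
          then obtain \<omega> where w: "\<omega> \<in> ev j A" "\<omega> \<in> ev j' A'" "\<omega> \<in> G" unfolding pj qj by auto
          have dist: "\<And>i k. i \<in> ?I \<Longrightarrow> k \<in> ?I \<Longrightarrow> i \<noteq> k \<Longrightarrow> X i \<omega> \<noteq> X k \<omega>"
            using w(3) unfolding G_def by blast
          have eA: "{i\<in>?I. X j \<omega> < X i \<omega>} = A" "{i\<in>?I. X j' \<omega> < X i \<omega>} = A'"
            using w unfolding ev_def by auto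
          have "card {i\<in>?I. X j \<omega> < X i \<omega>} = card {i\<in>?I. X j' \<omega> < X i \<omega>}"
            using eA j j' by simp
          hence "j = j'" using inj_onD[OF rank_inj[of ?I "\<lambda>i. X i \<omega>"] _ j(1) j'(1)] dist by simp
          hence "A = A'" using eA by simp
          thus False using pq \<open>j = j'\<close> unfolding pj qj by simp
        qed
      qed
    qed
    also have "(\<Union>p\<in>P k. ?F p) = G"
    proof
      show "(\<Union>p\<in>P k. ?F p) \<subseteq> G" by auto
      show "G \<subseteq> (\<Union>p\<in>P k. ?F p)"
      proof
        fix \<omega> assume w: "\<omega> \<in> G"
        have dist: "\<And>i k. i \<in> ?I \<Longrightarrow> k \<in> ?I \<Longrightarrow> i \<noteq> k \<Longrightarrow> X i \<omega> \<noteq> X k \<omega>"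
          using w unfolding G_def by blast
        obtain j where j: "j \<in> ?I" "card {i\<in>?I. X j \<omega> < X i \<omega>} = k"
          using rank_surj[of n "\<lambda>i. X i \<omega>" k] dist k by auto
        let ?A = "{i\<in>?I. X j \<omega> < X i \<omega>}"
        have "(j, ?A) \<in> P k" using j unfolding P_def by auto
        moreover have "\<omega> \<in> ?F (j, ?A)" using w unfolding ev_def G_def by auto
        ultimately show "\<omega> \<in> (\<Union>p\<in>P k. ?F p)" by blast
      qed
    qed
    also have "measure M G = 1"
    proof -
      have "measure M G = measure M (space M)"
        by (rule measure_eq_AE) (use AEG G_sets in auto)
      thus ?thesis by (simp add: prob_space)
    qed
    finally show ?thesis .
  qed
  have val: "measure M (ev j A) = 1 / (real n * real (n - 1 choose card A))"
    if h: "j \<in> ?I" "A \<subseteq> ?I - {j}" for j A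
  proof -
    let ?k = "card A"
    have "?k \<le> card (?I - {j})" using h by (intro card_mono) auto
    hence kn: "?k < n" using h by auto
    have "(\<Sum>p\<in>P ?k. measure M (ev (fst p) (snd p))) = (\<Sum>p\<in>P ?k. measure M (ev j A))"
    proof (rule sum.cong[OF refl])
      fix p assume "p \<in> P ?k"
      thus "measure M (ev (fst p) (snd p)) = measure M (ev j A)"
        unfolding P_def using sym[of "fst p" j "snd p" A] h by auto
    qed
    hence "real (card (P ?k)) * measure M (ev j A) = 1" using tot[OF kn] by simp
    hence "real n * real (n - 1 choose ?k) * measure M (ev j A) = 1" unfolding cardP by simp
    moreover have "real n * real (n - 1 choose ?k) \<noteq> 0" using kn by simp
    ultimately show ?thesis by (simp add: field_simps)
  qed
  define E where "E = {\<omega>\<in>space M. sys_lifetime n \<phi> X \<omega> = X j \<omega>}"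
  have E_sets: "E \<in> sets M"
  proof -
    have p1: "Measurable.pred M (\<lambda>\<omega>. \<phi> {i\<in>?I. X i \<omega> > c \<omega>})" if "c \<in> borel_measurable M" for c
    proof (rule pred_setfun)
      fix i assume "i \<in> ?I"
      thus "Measurable.pred M (\<lambda>\<omega>. c \<omega> < X i \<omega>)" using that Xm by measurable
    qed simp
    have "Measurable.pred M (\<lambda>\<omega>. 0 \<le> X j \<omega> \<and> \<not> \<phi> {i\<in>?I. X i \<omega> > X j \<omega>} \<and>
     (0 < X j \<omega> \<longrightarrow> \<phi> {i\<in>?I. X i \<omega> > 0}) \<and>
     (\<forall>k\<in>?I. 0 \<le> X k \<omega> \<and> X k \<omega> < X j \<omega> \<longrightarrow> \<phi> {i\<in>?I. X i \<omega> > X k \<omega>}))"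
    proof (intro pred_intros_logic pred_intros_finite p1 finite_atLeastAtMost)
      show "Measurable.pred M (\<lambda>\<omega>. 0 \<le> X j \<omega>)" using Xm jI by measurable
      show "Measurable.pred M (\<lambda>\<omega>. 0 < X j \<omega>)" using Xm jI by measurable
      show "X j \<in> borel_measurable M" using Xm jI by simp
      show "(\<lambda>\<omega>. 0::real) \<in> borel_measurable M" by simp
      fix k assume k: "k \<in> ?I"
      show "Measurable.pred M (\<lambda>\<omega>. 0 \<le> X k \<omega>)" using Xm k by measurable
      show "Measurable.pred M (\<lambda>\<omega>. X k \<omega> < X j \<omega>)" using Xm k jI by measurable
      show "X k \<in> borel_measurable M" using Xm k by simp
    qed
    moreover have "E = {\<omega>\<in>space M. 0 \<le> X j \<omega> \<and> \<not> \<phi> {i\<in>?I. X i \<omega> > X j \<omega>} \<and>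
     (0 < X j \<omega> \<longrightarrow> \<phi> {i\<in>?I. X i \<omega> > 0}) \<and>
     (\<forall>k\<in>?I. 0 \<le> X k \<omega> \<and> X k \<omega> < X j \<omega> \<longrightarrow> \<phi> {i\<in>?I. X i \<omega> > X k \<omega>})}"
      unfolding E_def using sys_char[OF sc, of X] by simp
    ultimately show ?thesis unfolding pred_def by simp
  qed
  define crit where "crit A = (\<phi> (A \<union> {j}) \<and> \<not> \<phi> A)" for A
  have piece: "E \<inter> G \<inter> ev j A = (if crit A then ev j A \<inter> G else {})" for A
  proof -
    have key: "\<omega> \<in> E \<longleftrightarrow> crit A" if w: "\<omega> \<in> G" "\<omega> \<in> ev j A" for \<omega>
    proof -
      have nn: "\<And>i. i \<in> ?I \<Longrightarrow> 0 \<le> X i \<omega>" and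
        dist: "\<And>i k. i \<in> ?I \<Longrightarrow> k \<in> ?I \<Longrightarrow> i \<noteq> k \<Longrightarrow> X i \<omega> \<noteq> X k \<omega>"
        using w(1) unfolding G_def by blast+
      have eA: "{i\<in>?I. X i \<omega> > X j \<omega>} = A" using w(2) unfolding ev_def by auto
      have sp: "\<omega> \<in> space M" using w(1) unfolding G_def by blast
      have "\<omega> \<in> E \<longleftrightarrow> sys_lifetime n \<phi> X \<omega> = X j \<omega>" unfolding E_def using sp by simp
      also have "\<dots> \<longleftrightarrow> (0 \<le> X j \<omega> \<and> \<not> \<phi> {i\<in>?I. X i \<omega> > X j \<omega>} \<and>
          (\<forall>c\<in>insert 0 ((\<lambda>i. X i \<omega>) ` ?I). 0 \<le> c \<and> c < X j \<omega> \<longrightarrow> \<phi> {i\<in>?I. X i \<omega> > c}))"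
        unfolding sys_lifetime_def using det_char[OF sc, of "\<lambda>i. X i \<omega>" "X j \<omega>"] by simp
      also have "\<dots> \<longleftrightarrow> \<phi> ({i\<in>?I. X i \<omega> > X j \<omega>} \<union> {j}) \<and> \<not> \<phi> {i\<in>?I. X i \<omega> > X j \<omega>}"
        using good_char[OF sc jI, of "\<lambda>i. X i \<omega>"] nn dist by simp
      finally show ?thesis unfolding eA crit_def .
    qed
    show ?thesis
    proof (cases "crit A")
      case True
      show ?thesis
      proof (rule set_eqI)
        fix \<omega> show "\<omega> \<in> E \<inter> G \<inter> ev j A \<longleftrightarrow> \<omega> \<in> (if crit A then ev j A \<inter> G else {})"
          using True key[of \<omega>] by auto
      qed
    next
      case False
      show ?thesis
      proof (rule set_eqI)
        fix \<omega> show "\<omega> \<in> E \<inter> G \<inter> ev j A \<longleftrightarrow> \<omega> \<in> (if crit A then ev j A \<inter> G else {})"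
          using False key[of \<omega>] by auto
      qed
    qed
  qed
  have "I_BP M n \<phi> X j = measure M E" unfolding I_BP_def E_def ..
  also have "\<dots> = measure M (E \<inter> G)"
    by (rule measure_eq_AE) (use AEG E_sets G_sets in auto)
  also have "E \<inter> G = (\<Union>A\<in>Pow (?I - {j}). E \<inter> G \<inter> ev j A)"
  proof
    show "E \<inter> G \<subseteq> (\<Union>A\<in>Pow (?I - {j}). E \<inter> G \<inter> ev j A)"
    proof
      fix \<omega> assume w: "\<omega> \<in> E \<inter> G"
      let ?A = "{i\<in>?I. X j \<omega> < X i \<omega>}"
      have "?A \<in> Pow (?I - {j})" by auto
      moreover have "\<omega> \<in> ev j ?A" using w unfolding ev_def E_def by auto
      ultimately show "\<omega> \<in> (\<Union>A\<in>Pow (?I - {j}). E \<inter> G \<inter> ev j A)" using w by blast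
    qed
  qed auto
  also have "measure M (\<Union>A\<in>Pow (?I - {j}). E \<inter> G \<inter> ev j A) = (\<Sum>A\<in>Pow (?I - {j}). measure M (E \<inter> G \<inter> ev j A))"
  proof (rule finite_measure_finite_Union)
    show "finite (Pow (?I - {j}))" by simp
    show "(\<lambda>A. E \<inter> G \<inter> ev j A) ` Pow (?I - {j}) \<subseteq> sets M" using E_sets G_sets ev_sets[OF jI] by auto
    show "disjoint_family_on (\<lambda>A. E \<inter> G \<inter> ev j A) (Pow (?I - {j}))"
      unfolding disjoint_family_on_def ev_def by auto
  qed
  also have "\<dots> = (\<Sum>A\<in>Pow (?I - {j}).
       (1 / (real n * real (n - 1 choose card A))) *
       (of_bool (\<phi> (A \<union> {j})) - of_bool (\<phi> A)))"
  proof (rule sum.cong[OF refl])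
    fix A assume A: "A \<in> Pow (?I - {j})"
    have mon: "\<And>A B. A \<subseteq> B \<Longrightarrow> B \<subseteq> ?I \<Longrightarrow> \<phi> A \<Longrightarrow> \<phi> B"
      using sc unfolding semicoherent_def by blast
    have Aj: "A \<union> {j} \<subseteq> ?I" using A jI by auto
    have mono: "\<phi> A \<Longrightarrow> \<phi> (A \<union> {j})" by (rule mon[OF _ Aj]) auto
    have "measure M (E \<inter> G \<inter> ev j A) = (if crit A then measure M (ev j A) else 0)"
      unfolding piece using ev_G[OF jI] by simp
    also have "\<dots> = (if crit A then 1 / (real n * real (n - 1 choose card A)) else 0)"
      using val[OF jI] A by simp
    also have "\<dots> = (1 / (real n * real (n - 1 choose card A))) *
       (of_bool (\<phi> (A \<union> {j})) - of_bool (\<phi> A))"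
      unfolding crit_def using mono by auto
    finally show "measure M (E \<inter> G \<inter> ev j A) = \<dots>" .
  qed
  finally show ?thesis .
qed

end
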